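(* For any matroid $L$ on a finite set $U$ and any $S\subseteq U$, the identity map on $U$ is a rank-preserving weak map $L|S\mathbin{\Box} L/S\rightarrow L$; that is, every independent set of $L$ is independent in $L|S\mathbin{\Box} L/S$, and the two matroids have the same rank.
   Context: For a matroid $M$ on $S$ write $\rho_M$ for rank, $\rho(M)=\rho_M(S)$, $\nu_M(A)=|A|-\rho_M(A)$, $\lambda_M(A)=\rho(M)-\rho_M(A)$. For matroids $M$ on $S$ and $N$ on $T$ with $S\cap T=\emptyset$, the free product $M\mathbin{\Box} N$ is the matroid on $S\cup T$ whose independent sets are those $A$ with $A\cap S$ independent in $M$ and $\lambda_M(A\cap S)\geq\nu_N(A\cap T)$. $L|S$ is the restriction to $S$ and $L/S$ the contraction of $S$ (on $U\setminus S$). The identity map is a weak map $L_1\to L_2$ between matroids on the same set if every independent set of $L_2$ is independent in $L_1$. *)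

theory Defs
  imports Main
begin

definition matroid :: "'a set \<Rightarrow> ('a set \<Rightarrow> bool) \<Rightarrow> bool" where
  "matroid E indep \<longleftrightarrow>
     finite E \<and>
     (\<forall>I. indep I \<longrightarrow> I \<subseteq> E) \<and>
     indep {} \<and>
     (\<forall>I J. indep J \<and> I \<subseteq> J \<longrightarrow> indep I) \<and>
     (\<forall>I J. indep I \<and> indep J \<and> card I < card J \<longrightarrow>
        (\<exists>x\<in>J - I. indep (insert x I)))"

definition rk :: "('a set \<Rightarrow> bool) \<Rightarrow> 'a set \<Rightarrow> nat" where
  "rk indep A = Max {card I | I. I \<subseteq> A \<and> indep I}"

definition mrank :: "'a set \<Rightarrow> ('a set \<Rightarrow> bool) \<Rightarrow> nat" where
  "mrank E indep = rk indep E"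

definition nullity :: "('a set \<Rightarrow> bool) \<Rightarrow> 'a set \<Rightarrow> nat" where
  "nullity indep A = card A - rk indep A"

definition lam :: "'a set \<Rightarrow> ('a set \<Rightarrow> bool) \<Rightarrow> 'a set \<Rightarrow> nat" where
  "lam E indep A = mrank E indep - rk indep A"

definition restr :: "('a set \<Rightarrow> bool) \<Rightarrow> 'a set \<Rightarrow> ('a set \<Rightarrow> bool)" where
  "restr indep S = (\<lambda>I. I \<subseteq> S \<and> indep I)"

definition contr :: "'a set \<Rightarrow> ('a set \<Rightarrow> bool) \<Rightarrow> 'a set \<Rightarrow> ('a set \<Rightarrow> bool)" where
  "contr U indep S = (\<lambda>I. I \<subseteq> U - S \<and> rk indep (I \<union> S) = card I + rk indep S)"

definition free_product ::
  "'a set \<Rightarrow> ('a set \<Rightarrow> bool) \<Rightarrow> 'a set \<Rightarrow> ('a set \<Rightarrow> bool) \<Rightarrow> ('a set \<Rightarrow> bool)" where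
  "free_product S indM T indN = (\<lambda>A. A \<subseteq> S \<union> T \<and> indM (A \<inter> S) \<and>
       lam S indM (A \<inter> S) \<ge> nullity indN (A \<inter> T))"

end

theory Submission
  imports Defs
begin

definition wfi :: "'a set \<Rightarrow> ('a set \<Rightarrow> bool) \<Rightarrow> bool" where
  "wfi U ind \<longleftrightarrow> finite U \<and> (\<forall>I. ind I \<longrightarrow> I \<subseteq> U) \<and> ind {}"

lemma matroid_wfi: "matroid U ind \<Longrightarrow> wfi U ind"
  unfolding matroid_def wfi_def by blast

lemma rk_fin: assumes "wfi U ind" shows "finite {card I | I. I \<subseteq> A \<and> ind I}"
proof -
  have "{card I | I. I \<subseteq> A \<and> ind I} \<subseteq> {..card U}"
    using assms unfolding wfi_def by (auto intro!: card_mono)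
  then show ?thesis using finite_subset by blast
qed

lemma rk_ge: assumes "wfi U ind" "I \<subseteq> A" "ind I" shows "card I \<le> rk ind A"
  unfolding rk_def by (rule Max_ge[OF rk_fin[OF assms(1)]]) (use assms in auto)

lemma rk_obt: assumes "wfi U ind" shows "\<exists>I. I \<subseteq> A \<and> ind I \<and> card I = rk ind A"
proof -
  have ne: "{card I | I. I \<subseteq> A \<and> ind I} \<noteq> {}" using assms unfolding wfi_def by blast
  have "rk ind A \<in> {card I | I. I \<subseteq> A \<and> ind I}"
    unfolding rk_def by (rule Max_in[OF rk_fin[OF assms] ne])
  then show ?thesis by auto
qed

lemma rk_le_card: assumes "wfi U ind" "finite A" shows "rk ind A \<le> card A"
  using rk_obt[OF assms(1), of A] assms(2) by (metis card_mono)

lemma rk_mono: assumes "wfi U ind" "A \<subseteq> B" shows "rk ind A \<le> rk ind B"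
  using rk_obt[OF assms(1), of A] rk_ge[OF assms(1)] assms(2) by (metis order_trans)

lemma rk_sub: assumes "wfi U ind" "\<forall>I J. ind J \<and> I \<subseteq> J \<longrightarrow> ind I"
  shows "rk ind (A \<union> B) \<le> rk ind A + rk ind B"
proof -
  obtain K where K: "K \<subseteq> A \<union> B" "ind K" "card K = rk ind (A \<union> B)"
    using rk_obt[OF assms(1)] by blast
  have fK: "finite K" using K assms(1) unfolding wfi_def by (meson finite_subset)
  have "K = (K \<inter> A) \<union> (K - A)" by blast
  then have "card K \<le> card (K \<inter> A) + card (K - A)" by (metis card_Un_le)
  moreover have "card (K \<inter> A) \<le> rk ind A"
    using rk_ge[OF assms(1), of "K \<inter> A" A] K assms(2) by blast
  moreover have "card (K - A) \<le> rk ind B"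
    using rk_ge[OF assms(1), of "K - A" B] K assms(2) by blast
  ultimately show ?thesis using K by linarith
qed

lemma aug: assumes "matroid U ind" "ind B" "ind I"
  shows "\<exists>J. ind J \<and> B \<subseteq> J \<and> J \<subseteq> B \<union> I \<and> card I \<le> card J"
proof -
  have fin: "finite U" and sub: "\<And>I. ind I \<Longrightarrow> I \<subseteq> U"
    using assms(1) unfolding matroid_def by auto
  let ?P = "\<lambda>J. ind J \<and> B \<subseteq> J \<and> J \<subseteq> B \<union> I"
  have "?P B" using assms by auto
  moreover have "\<forall>y. ?P y \<longrightarrow> card y < Suc (card U)" using fin sub by (meson card_mono le_imp_less_Suc)
  ultimately obtain J where J: "?P J" "\<forall>y. ?P y \<longrightarrow> card y \<le> card J"
    using ex_has_greatest_nat[of ?P B card "Suc (card U)"] by blast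
  show ?thesis
  proof (cases "card I \<le> card J")
    case True then show ?thesis using J by blast
  next
    case False
    then obtain x where x: "x \<in> I - J" "ind (insert x J)"
      using assms(1) J(1) assms(3) unfolding matroid_def by (meson not_le)
    have "finite J" using J(1) sub fin by (meson finite_subset)
    then have "card (insert x J) = Suc (card J)" using x by simp
    moreover have "?P (insert x J)" using x J(1) by auto
    ultimately show ?thesis using J(2) by fastforce
  qed
qed

theorem proposition4p2:
  fixes U S :: "'a set" and indL :: "'a set \<Rightarrow> bool"
  assumes "matroid U indL" and "S \<subseteq> U"
  shows "(\<forall>I. indL I \<longrightarrow> free_product S (restr indL S) (U - S) (contr U indL S) I)
       \<and> mrank U (free_product S (restr indL S) (U - S) (contr U indL S)) = mrank U indL"
proof -
  have wL: "wfi U indL" using matroid_wfi[OF assms(1)] .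
  have fin: "finite U" and sub: "\<And>I. indL I \<Longrightarrow> I \<subseteq> U"
    and down: "\<forall>I J. indL J \<and> I \<subseteq> J \<longrightarrow> indL I"
    using assms(1) unfolding matroid_def by auto
  let ?M = "restr indL S" and ?N = "contr U indL S"
  let ?F = "free_product S ?M (U - S) ?N"
  have wN: "wfi U ?N" using fin unfolding wfi_def contr_def by auto
  have rkM: "\<And>X. X \<subseteq> S \<Longrightarrow> rk ?M X = rk indL X"
  proof -
    fix X assume "X \<subseteq> S"
    then have "{card I | I. I \<subseteq> X \<and> ?M I} = {card I | I. I \<subseteq> X \<and> indL I}"
      unfolding restr_def by blast
    then show "rk ?M X = rk indL X" unfolding rk_def by simp
  qed
  have Fiff: "\<And>A. ?F A \<longleftrightarrow> A \<subseteq> U \<and> A \<inter> S \<subseteq> S \<and> indL (A \<inter> S) \<and>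
      card (A \<inter> (U - S)) - rk ?N (A \<inter> (U - S)) \<le> rk indL S - rk indL (A \<inter> S)"
    unfolding free_product_def lam_def nullity_def mrank_def restr_def[of indL S, symmetric]
    using rkM assms(2) by (auto simp: restr_def)
  have wF: "wfi U ?F" using fin unfolding wfi_def Fiff by (auto simp: down)
    (use assms(1) matroid_def in auto)
  have part1: "\<forall>I. indL I \<longrightarrow> ?F I"
  proof (intro allI impI)
    fix I assume I: "indL I"
    define X where "X = I \<inter> S"
    define Y where "Y = I \<inter> (U - S)"
    have IU: "I \<subseteq> U" using sub I .
    have fI: "finite I" using IU fin by (meson finite_subset)
    have X: "indL X" "X \<subseteq> S" using down I unfolding X_def by (blast, blast)
    have cI: "card I = card X + card Y"
    proof -
      have "I = X \<union> Y" "X \<inter> Y = {}" using IU unfolding X_def Y_def by auto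
      then show ?thesis using fI by (metis card_Un_disjoint finite_Un)
    qed
    obtain B0 where B0: "B0 \<subseteq> S" "indL B0" "card B0 = rk indL S" using rk_obt[OF wL] by blast
    obtain B where B: "indL B" "X \<subseteq> B" "B \<subseteq> X \<union> B0" "card B0 \<le> card B"
      using aug[OF assms(1) X(1) B0(2)] by blast
    have BS: "B \<subseteq> S" using B(3) X(2) B0(1) by blast
    have cB: "card B = rk indL S" using rk_ge[OF wL BS B(1)] B(4) B0(3) by linarith
    obtain J where J: "indL J" "B \<subseteq> J" "J \<subseteq> B \<union> I" "card I \<le> card J"
      using aug[OF assms(1) B(1) I] by blast
    define Z where "Z = J - B"
    have fJ: "finite J" using sub J(1) fin by (meson finite_subset)
    have cZ: "card Z = card J - card B" unfolding Z_def using fJ J(2) by (simp add: card_Diff_subset finite_subset)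
    have cBJ: "card B \<le> card J" using fJ J(2) card_mono by blast
    have ZY: "Z \<subseteq> Y" unfolding Z_def Y_def using J(3) IU B(2) X_def by blast
    have "?N Z"
    proof -
      have "Z \<subseteq> U - S" using ZY Y_def by blast
      moreover have "card J \<le> rk indL (Z \<union> S)"
        using rk_ge[OF wL _ J(1), of "Z \<union> S"] BS Z_def by blast
      moreover have "rk indL (Z \<union> S) \<le> rk indL Z + rk indL S" using rk_sub[OF wL down] .
      moreover have "rk indL Z \<le> card Z" using rk_le_card[OF wL] fJ Z_def by simp
      ultimately show ?thesis unfolding contr_def using cZ cB cBJ by auto
    qed
    then have "card Z \<le> rk ?N Y" using rk_ge[OF wN ZY] by blast
    moreover have "rk indL X = card X"
      using rk_ge[OF wL order_refl X(1)] rk_le_card[OF wL] fI X_def by (simp add: le_antisym)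
    moreover have "card X \<le> rk indL S" using rk_ge[OF wL X(2) X(1)] .
    ultimately have "card Y - rk ?N Y \<le> rk indL S - rk indL X"
      using cZ cB cI J(4) by linarith
    then show "?F I" unfolding Fiff using IU X X_def Y_def by simp
  qed
  have "rk ?F U = rk indL U"
  proof (rule antisym)
    obtain A where A: "A \<subseteq> U" "?F A" "card A = rk ?F U" using rk_obt[OF wF] by blast
    define X where "X = A \<inter> S"
    define Y where "Y = A \<inter> (U - S)"
    have fA: "finite A" using A fin by (meson finite_subset)
    have cA: "card A = card X + card Y"
    proof -
      have "A = X \<union> Y" "X \<inter> Y = {}" using A(1) unfolding X_def Y_def by auto
      then show ?thesis using fA by (metis card_Un_disjoint finite_Un)
    qed
    have F: "indL X" "card Y - rk ?N Y \<le> rk indL S - rk indL X"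
      using A(2) unfolding Fiff X_def Y_def by auto
    have "rk indL X = card X"
      using rk_ge[OF wL order_refl F(1)] rk_le_card[OF wL] fA X_def by (simp add: le_antisym)
    moreover have "card X \<le> rk indL S" using rk_ge[OF wL _ F(1)] X_def by blast
    moreover have "rk ?N Y \<le> card Y" using rk_le_card[OF wN] fA Y_def by simp
    moreover obtain Z where Z: "Z \<subseteq> Y" "?N Z" "card Z = rk ?N Y" using rk_obt[OF wN] by blast
    moreover have "rk indL (Z \<union> S) \<le> rk indL U"
      using rk_mono[OF wL] Z(1) Y_def assms(2) by blast
    ultimately show "rk ?F U \<le> rk indL U" using A(3) cA F(2) unfolding contr_def by auto
  next
    obtain I where I: "I \<subseteq> U" "indL I" "card I = rk indL U" using rk_obt[OF wL] by blast
    show "rk indL U \<le> rk ?F U" using rk_ge[OF wF I(1)] part1 I by auto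
  qed
  then show ?thesis using part1 unfolding mrank_def by simp
qed

end
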